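(* Let $X$, $Y$, $\tilde Y$ be categories and let $\tilde G\colon \tilde Y\to Y$ and $G\colon Y\to X$ be functors. Let $x_0$ be a locally initial object of $X$ and suppose that $y_0$ is an initial object of the full subcategory $Y_G(x_0)$ of $Y$. Suppose that $\tilde G$ admits a left adjoint $\tilde F\colon Y\to\tilde Y$. Then $\tilde F y_0$ is an initial object of the full subcategory $\tilde Y_{G\tilde G}(x_0)$ of $\tilde Y$. Moreover, $\tilde F z$ is a locally initial object of $\tilde Y$ for every locally initial object $z$ of $Y$.
   Context: An object $x_0$ of a category $X$ is locally initial if for every object $x$ of $X$ there exists at most one morphism $x_0\to x$. For a locally initial object $x_0$ of $X$ and a functor $G\colon Y\to X$, $Y_G(x_0)$ denotes the full subcategory of $Y$ consisting of all objects $y$ such that there exists a morphism $x_0\to Gy$ in $X$. (Thus $\tilde Y_{G\tilde G}(x_0)$ consists of all objects $\tilde y$ of $\tilde Y$ admitting a morphism $x_0\to G\tilde G\tilde y$.) *)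

theory Defs
  imports Main
begin

text \<open>Categories in arrow style: objects, arrows, domain, codomain, identities,
  composition (ccomp C g f means g after f).\<close>

record ('o, 'm) category =
  ob :: "'o set"
  ar :: "'m set"
  cdom :: "'m \<Rightarrow> 'o"
  ccod :: "'m \<Rightarrow> 'o"
  cid :: "'o \<Rightarrow> 'm"
  ccomp :: "'m \<Rightarrow> 'm \<Rightarrow> 'm"

definition hom :: "('o, 'm) category \<Rightarrow> 'o \<Rightarrow> 'o \<Rightarrow> 'm set" where
  "hom C a b = {f \<in> ar C. cdom C f = a \<and> ccod C f = b}"

definition is_category :: "('o, 'm) category \<Rightarrow> bool" where
  "is_category C \<longleftrightarrow>
     (\<forall>f \<in> ar C. cdom C f \<in> ob C \<and> ccod C f \<in> ob C) \<and>
     (\<forall>a \<in> ob C. cid C a \<in> hom C a a) \<and>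
     (\<forall>f \<in> ar C. \<forall>g \<in> ar C. ccod C f = cdom C g \<longrightarrow>
        ccomp C g f \<in> hom C (cdom C f) (ccod C g)) \<and>
     (\<forall>f \<in> ar C. ccomp C f (cid C (cdom C f)) = f \<and> ccomp C (cid C (ccod C f)) f = f) \<and>
     (\<forall>f \<in> ar C. \<forall>g \<in> ar C. \<forall>h \<in> ar C. ccod C f = cdom C g \<longrightarrow> ccod C g = cdom C h \<longrightarrow>
        ccomp C h (ccomp C g f) = ccomp C (ccomp C h g) f)"

record ('o1, 'm1, 'o2, 'm2) cfunctor =
  fo :: "'o1 \<Rightarrow> 'o2"
  fm :: "'m1 \<Rightarrow> 'm2"

definition is_functor ::
  "('o1, 'm1) category \<Rightarrow> ('o2, 'm2) category \<Rightarrow> ('o1, 'm1, 'o2, 'm2) cfunctor \<Rightarrow> bool" where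
  "is_functor C D F \<longleftrightarrow>
     (\<forall>a \<in> ob C. fo F a \<in> ob D \<and> fm F (cid C a) = cid D (fo F a)) \<and>
     (\<forall>f \<in> ar C. fm F f \<in> hom D (fo F (cdom C f)) (fo F (ccod C f))) \<and>
     (\<forall>f \<in> ar C. \<forall>g \<in> ar C. ccod C f = cdom C g \<longrightarrow>
        fm F (ccomp C g f) = ccomp D (fm F g) (fm F f))"

definition fcomp :: "('o2, 'm2, 'o3, 'm3) cfunctor \<Rightarrow> ('o1, 'm1, 'o2, 'm2) cfunctor
    \<Rightarrow> ('o1, 'm1, 'o3, 'm3) cfunctor" where
  "fcomp G F = \<lparr>fo = fo G \<circ> fo F, fm = fm G \<circ> fm F\<rparr>"

definition is_left_adjoint ::
  "('o1, 'm1) category \<Rightarrow> ('o2, 'm2) category \<Rightarrow> ('o1, 'm1, 'o2, 'm2) cfunctor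
     \<Rightarrow> ('o2, 'm2, 'o1, 'm1) cfunctor \<Rightarrow> bool" where
  "is_left_adjoint Y Yt F G \<longleftrightarrow>
     is_functor Y Yt F \<and> is_functor Yt Y G \<and>
     (\<exists>\<eta>. (\<forall>y \<in> ob Y. \<eta> y \<in> hom Y y (fo G (fo F y))) \<and>
          (\<forall>f \<in> ar Y. ccomp Y (\<eta> (ccod Y f)) f = ccomp Y (fm G (fm F f)) (\<eta> (cdom Y f))) \<and>
          (\<forall>y \<in> ob Y. \<forall>z \<in> ob Yt. \<forall>f \<in> hom Y y (fo G z).
              \<exists>!g. g \<in> hom Yt (fo F y) z \<and> ccomp Y (fm G g) (\<eta> y) = f))"

definition full_subcat :: "('o, 'm) category \<Rightarrow> 'o set \<Rightarrow> ('o, 'm) category" where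
  "full_subcat C S = C\<lparr>ob := S, ar := {f \<in> ar C. cdom C f \<in> S \<and> ccod C f \<in> S}\<rparr>"

definition initial :: "('o, 'm) category \<Rightarrow> 'o \<Rightarrow> bool" where
  "initial C x \<longleftrightarrow> x \<in> ob C \<and> (\<forall>y \<in> ob C. \<exists>!f. f \<in> hom C x y)"

definition locally_initial :: "('o, 'm) category \<Rightarrow> 'o \<Rightarrow> bool" where
  "locally_initial C x \<longleftrightarrow> x \<in> ob C \<and> (\<forall>y \<in> ob C. \<forall>f \<in> hom C x y. \<forall>g \<in> hom C x y. f = g)"

text \<open>Objects of Y_G(x0): those y admitting a morphism x0 \<rightarrow> G y in X.\<close>
definition under_obj :: "('a, 'ma) category \<Rightarrow> ('b, 'mb) category \<Rightarrow> ('b, 'mb, 'a, 'ma) cfunctor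
    \<Rightarrow> 'a \<Rightarrow> 'b set" where
  "under_obj X Y G x0 = {y \<in> ob Y. hom X x0 (fo G y) \<noteq> {}}"

end

theory Submission
  imports Defs
begin

lemma hom_full: "hom (full_subcat C S) a b = (if a \<in> S \<and> b \<in> S then hom C a b else {})"
  by (auto simp: hom_def full_subcat_def)

lemma ex1_same: "\<exists>!x. P x \<Longrightarrow> P a \<Longrightarrow> P b \<Longrightarrow> a = b"
  by blast

lemma ob_full[simp]: "ob (full_subcat C S) = S"
  by (simp add: full_subcat_def)

theorem theorem2p3:
  fixes X :: "('a, 'ma) category" and Y :: "('b, 'mb) category" and Yt :: "('c, 'mc) category"
    and Gt :: "('c, 'mc, 'b, 'mb) cfunctor" and G :: "('b, 'mb, 'a, 'ma) cfunctor"
    and Ft :: "('b, 'mb, 'c, 'mc) cfunctor"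
  assumes "is_category X" and "is_category Y" and "is_category Yt"
    and "is_functor Yt Y Gt" and "is_functor Y X G"
    and "locally_initial X x0"
    and "initial (full_subcat Y (under_obj X Y G x0)) y0"
    and "is_left_adjoint Y Yt Ft Gt"
  shows "initial (full_subcat Yt (under_obj X Yt (fcomp G Gt) x0)) (fo Ft y0)
         \<and> (\<forall>z. locally_initial Y z \<longrightarrow> locally_initial Yt (fo Ft z))"
proof -
  let ?S = "under_obj X Y G x0"
  let ?T = "under_obj X Yt (fcomp G Gt) x0"
  have F: "is_functor Y Yt Ft" using assms(8) by (simp add: is_left_adjoint_def)
  obtain \<eta> where eta: "\<forall>y \<in> ob Y. \<eta> y \<in> hom Y y (fo Gt (fo Ft y))"
    and uni: "\<forall>y \<in> ob Y. \<forall>z \<in> ob Yt. \<forall>f \<in> hom Y y (fo Gt z).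
              \<exists>!g. g \<in> hom Yt (fo Ft y) z \<and> ccomp Y (fm Gt g) (\<eta> y) = f"
    using assms(8) unfolding is_left_adjoint_def by blast
  have Fo: "\<And>y. y \<in> ob Y \<Longrightarrow> fo Ft y \<in> ob Yt" using F by (simp add: is_functor_def)
  have Gto: "\<And>w. w \<in> ob Yt \<Longrightarrow> fo Gt w \<in> ob Y" using assms(4) by (simp add: is_functor_def)
  have Gtm: "\<And>g a b. g \<in> hom Yt a b \<Longrightarrow> fm Gt g \<in> hom Y (fo Gt a) (fo Gt b)"
    using assms(4) by (auto simp: is_functor_def hom_def)
  have Gm: "\<And>g a b. g \<in> hom Y a b \<Longrightarrow> fm G g \<in> hom X (fo G a) (fo G b)"
    using assms(5) by (auto simp: is_functor_def hom_def)
  have compY: "\<And>f g a b c. f \<in> hom Y a b \<Longrightarrow> g \<in> hom Y b c \<Longrightarrow> ccomp Y g f \<in> hom Y a c"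
    using assms(2) unfolding is_category_def hom_def by auto
  have compX: "\<And>f g a b c. f \<in> hom X a b \<Longrightarrow> g \<in> hom X b c \<Longrightarrow> ccomp X g f \<in> hom X a c"
    using assms(1) unfolding is_category_def hom_def by auto
  have y0: "y0 \<in> ?S" and y0u: "\<forall>y \<in> ?S. \<exists>!f. f \<in> hom Y y0 y"
    using assms(7) unfolding initial_def by (auto simp: hom_full split: if_splits)
  have y0Y: "y0 \<in> ob Y" using y0 by (simp add: under_obj_def)
  obtain h where h: "h \<in> hom X x0 (fo G y0)" using y0 by (auto simp: under_obj_def)
  have "ccomp X (fm G (\<eta> y0)) h \<in> hom X x0 (fo G (fo Gt (fo Ft y0)))"
    using compX[OF h Gm[OF eta[rule_format, OF y0Y]]] .
  hence Fy0: "fo Ft y0 \<in> ?T" using Fo[OF y0Y] by (auto simp: under_obj_def fcomp_def)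
  have P1: "initial (full_subcat Yt ?T) (fo Ft y0)"
    unfolding initial_def
  proof (intro conjI ballI)
    show "fo Ft y0 \<in> ob (full_subcat Yt ?T)" using Fy0 by simp
  next
    fix w assume "w \<in> ob (full_subcat Yt ?T)"
    hence w: "w \<in> ?T" by simp
    hence wY: "w \<in> ob Yt" by (simp add: under_obj_def)
    have GwS: "fo Gt w \<in> ?S" using w Gto[OF wY] by (simp add: under_obj_def fcomp_def)
    then obtain f where f: "f \<in> hom Y y0 (fo Gt w)" and fu: "\<And>f'. f' \<in> hom Y y0 (fo Gt w) \<Longrightarrow> f' = f"
      using y0u by metis
    obtain g where g: "g \<in> hom Yt (fo Ft y0) w" "ccomp Y (fm Gt g) (\<eta> y0) = f"
      using uni[rule_format, OF y0Y wY f] by blast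
    show "\<exists>!g. g \<in> hom (full_subcat Yt ?T) (fo Ft y0) w"
    proof (rule ex1I[of _ g])
      show "g \<in> hom (full_subcat Yt ?T) (fo Ft y0) w" using g Fy0 w by (simp add: hom_full)
    next
      fix g' assume "g' \<in> hom (full_subcat Yt ?T) (fo Ft y0) w"
      hence g': "g' \<in> hom Yt (fo Ft y0) w" using Fy0 w by (simp add: hom_full)
      have "ccomp Y (fm Gt g') (\<eta> y0) \<in> hom Y y0 (fo Gt w)"
        using compY[OF eta[rule_format, OF y0Y] Gtm[OF g']] .
      hence e: "ccomp Y (fm Gt g') (\<eta> y0) = f" by (rule fu)
      show "g' = g" by (rule ex1_same[OF uni[rule_format, OF y0Y wY f]]) (use g g' e in auto)
    qed
  qed
  have P2: "locally_initial Yt (fo Ft z)" if z: "locally_initial Y z" for z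
  proof -
    have zY: "z \<in> ob Y" using z by (simp add: locally_initial_def)
    show ?thesis unfolding locally_initial_def
    proof (intro conjI ballI)
      show "fo Ft z \<in> ob Yt" using Fo[OF zY] .
    next
      fix w f g assume wY: "w \<in> ob Yt" and f: "f \<in> hom Yt (fo Ft z) w" and g: "g \<in> hom Yt (fo Ft z) w"
      have a: "ccomp Y (fm Gt f) (\<eta> z) \<in> hom Y z (fo Gt w)"
        using compY[OF eta[rule_format, OF zY] Gtm[OF f]] .
      have b: "ccomp Y (fm Gt g) (\<eta> z) \<in> hom Y z (fo Gt w)"
        using compY[OF eta[rule_format, OF zY] Gtm[OF g]] .
      have e: "ccomp Y (fm Gt f) (\<eta> z) = ccomp Y (fm Gt g) (\<eta> z)"
        using z a b Gto[OF wY] unfolding locally_initial_def by blast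
      show "f = g" by (rule ex1_same[OF uni[rule_format, OF zY wY a]]) (use f g e in auto)
    qed
  qed
  show ?thesis using P1 P2 by blast
qed

end
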